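(* Let $\mu>0$, $\tau>0$, $\kappa>0$, $n\in\mathbb N$ be fixed and let $\Delta(\lambda,\alpha)=1-(1-\ln\alpha)e^{-\lambda\tau}(1+\frac{\lambda}{\mu+\kappa})^{-n-1}$. For $k\in\mathbb N$ let $\omega_k>0$ be the unique solution of $\omega\tau+(n+1)\arctan\frac{\omega}{\mu+\kappa}=\pi+2k\pi$ and $\alpha_k=\exp\big(1+(1+\omega_k^2/(\mu+\kappa)^2)^{(n+1)/2}\big)$, so that $\Delta(\pm i\omega_k,\alpha_k)=0$. Then for each $k\ge0$ there exist $\rho_k>0$ and a $C^1$ map $\hat\lambda_k:(\alpha_k-\rho_k,\alpha_k+\rho_k)\to\mathbb C$ such that $\hat\lambda_k(\alpha_k)=i\omega_k$, $\Delta(\hat\lambda_k(\alpha),\alpha)=0$ for all $\alpha\in(\alpha_k-\rho_k,\alpha_k+\rho_k)$, and $$\operatorname{Re}\frac{d\hat\lambda_k}{d\alpha}(\alpha_k)>0.$$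
   Context: $\Delta$ is the characteristic function of the linearization at $\bar u(a)=\ln(\alpha)e^{-\mu a}$ of $\partial_tu+\partial_au=-\mu u$, $u(t,0)=\alpha f(\int_0^\infty\beta(a)u(t,a)\,da)$, $f(x)=xe^{-x}$, with $\beta(a)=C_0(a-\tau)^ne^{-\kappa(a-\tau)}\mathbf 1_{[\tau,\infty)}(a)$ normalized by $\int_0^\infty\beta(a)e^{-\mu a}da=1$. *)

theory Defs
  imports "HOL-Analysis.Analysis"
begin

definition Delta :: "real \<Rightarrow> real \<Rightarrow> real \<Rightarrow> nat \<Rightarrow> complex \<Rightarrow> real \<Rightarrow> complex" where
  "Delta mu tau kappa n lam alpha =
     1 - complex_of_real (1 - ln alpha) * exp (- lam * complex_of_real tau)
         * inverse ((1 + lam / complex_of_real (mu + kappa)) ^ (n + 1))"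

definition omega_k :: "real \<Rightarrow> real \<Rightarrow> real \<Rightarrow> nat \<Rightarrow> nat \<Rightarrow> real" where
  "omega_k mu tau kappa n k =
     (THE w. w > 0 \<and> w * tau + real (n + 1) * arctan (w / (mu + kappa)) = pi + 2 * real k * pi)"

definition alpha_k :: "real \<Rightarrow> real \<Rightarrow> real \<Rightarrow> nat \<Rightarrow> nat \<Rightarrow> real" where
  "alpha_k mu tau kappa n k =
     exp (1 + (1 + (omega_k mu tau kappa n k)\<^sup>2 / (mu + kappa)\<^sup>2) powr (real (n + 1) / 2))"

end

theory Submission imports Defs "HOL-Complex_Analysis.Complex_Analysis" begin

lemma omega_ex1:
  fixes tau c :: real and n k :: nat
  assumes tau: "tau > 0" and c: "c > 0"
  shows "\<exists>!w. w > 0 \<and> w * tau + real (n + 1) * arctan (w / c) = pi + 2 * real k * pi"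
proof -
  define F where "F w = w*tau + real(n+1)*arctan(w/c)" for w
  define T where "T = pi + 2*real k*pi"
  have T: "T > 0" unfolding T_def using pi_gt_zero by (simp add: add_pos_nonneg)
  have mono: "F a < F b" if "a < b" for a b
  proof -
    have "a/c \<le> b/c" using that c by (simp add: divide_right_mono)
    then have "arctan (a/c) \<le> arctan (b/c)" by (simp add: arctan_le_iff)
    moreover have "a*tau < b*tau" using that tau by simp
    ultimately show ?thesis unfolding F_def
      by (smt (verit) mult_left_mono of_nat_0_le_iff)
  qed
  have F0: "F 0 = 0" by (simp add: F_def)
  have "T \<le> F (T/tau)" unfolding F_def using tau T c by simp
  moreover have "\<forall>x. 0 \<le> x \<and> x \<le> T/tau \<longrightarrow> isCont F x"
    unfolding F_def by (intro allI impI continuous_intros isCont_o2[OF _ isCont_arctan]) (use c in auto)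
  ultimately obtain w where w: "0 \<le> w" "w \<le> T/tau" "F w = T"
    using IVT[of F 0 T "T/tau"] F0 T tau by auto
  have "w \<noteq> 0" using w F0 T by auto
  with w have wp: "w > 0 \<and> F w = T" by auto
  show ?thesis unfolding F_def[symmetric] T_def[symmetric]
  proof (rule ex1I[of _ w])
    show "w > 0 \<and> F w = T" by (rule wp)
    fix v assume "v > 0 \<and> F v = T"
    then show "v = w" using wp mono by (metis less_irrefl linorder_neqE)
  qed
qed

lemma omega_spec:
  fixes mu tau kappa :: real and n k :: nat
  assumes "mu > 0" and "tau > 0" and "kappa > 0"
  shows "omega_k mu tau kappa n k > 0 \<and> omega_k mu tau kappa n k * tau + real (n + 1) * arctan (omega_k mu tau kappa n k / (mu + kappa)) = pi + 2 * real k * pi"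
  unfolding omega_k_def using theI'[OF omega_ex1[of tau "mu+kappa" n k]] assms by auto

lemma value_at:
  fixes tau c w T :: real and n :: nat
  assumes c: "c > 0" and eq: "w * tau + real (n + 1) * arctan (w / c) = pi + 2 * real k * pi"
  shows "exp (\<i> * complex_of_real w * complex_of_real tau) * (1 + \<i> * complex_of_real w / complex_of_real c) ^ (n+1)
     = - complex_of_real ((1 + w\<^sup>2 / c\<^sup>2) powr (real (n + 1) / 2))"
proof -
  define x where "x = w / c"
  define s where "s = sqrt (1 + x\<^sup>2)"
  have s: "s > 0" unfolding s_def by (simp add: add_pos_nonneg)
  have "1 + \<i> * complex_of_real w / complex_of_real c = complex_of_real s * cis (arctan x)"
  proof -
    have "complex_of_real w / complex_of_real c = complex_of_real x" by (simp add: x_def)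
    moreover have "complex_of_real s * cis (arctan x) = 1 + \<i> * complex_of_real x"
      using s unfolding cis.ctr cos_arctan sin_arctan s_def[symmetric]
      by (simp add: complex_eq_iff)
    ultimately show ?thesis by (metis times_divide_eq_right)
  qed
  then have "(1 + \<i> * complex_of_real w / complex_of_real c) ^ (n+1) = complex_of_real (s^(n+1)) * cis (real (n+1) * arctan x)"
    using Complex.DeMoivre[of "arctan x" "n+1"] by (simp only: power_mult_distrib of_real_power)
  moreover have "exp (\<i> * complex_of_real w * complex_of_real tau) = cis (w*tau)"
    by (simp add: cis_conv_exp mult.commute mult.left_commute)
  ultimately have "exp (\<i> * complex_of_real w * complex_of_real tau) * (1 + \<i> * complex_of_real w / complex_of_real c) ^ (n+1)
      = complex_of_real (s^(n+1)) * cis (pi + 2 * real k * pi)"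
    using eq unfolding x_def by (simp add: cis_mult mult_ac)
  also have "cis (pi + 2 * real k * pi) = -1"
  proof -
    have "cis (pi + 2 * real k * pi) = cis pi * cis (2*pi*real k)" by (simp only: cis_mult mult_ac)
    also have "cis (2*pi*real k) = 1" using cis_multiple_2pi[of "real k"] by simp
    finally show ?thesis by simp
  qed
  also have "s^(n+1) = (1 + w\<^sup>2 / c\<^sup>2) powr (real (n + 1) / 2)"
  proof -
    have p: "1 + x\<^sup>2 > 0" by (simp add: add_pos_nonneg)
    have "s^(n+1) = s powr real (n+1)" using s powr_realpow[of s "n+1"] by simp
    also have "\<dots> = (sqrt (1 + x\<^sup>2)) powr real (n+1)" by (simp add: s_def)
    also have "\<dots> = ((1 + x\<^sup>2) powr (1/2)) powr real (n+1)" using p by (simp add: powr_half_sqrt)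
    also have "\<dots> = (1 + x\<^sup>2) powr (real (n + 1) / 2)" by (simp add: powr_powr)
    finally show ?thesis by (simp add: x_def power_divide)
  qed
  finally show ?thesis by simp
qed

theorem theorem7p3:
  fixes mu tau kappa :: real and n k :: nat
  assumes "mu > 0" and "tau > 0" and "kappa > 0"
  shows "\<exists>\<rho>>0. \<exists>lam lam' :: real \<Rightarrow> complex.
     (\<forall>a\<in>{alpha_k mu tau kappa n k - \<rho> <..< alpha_k mu tau kappa n k + \<rho>}.
        (lam has_vector_derivative lam' a) (at a)) \<and>
     continuous_on {alpha_k mu tau kappa n k - \<rho> <..< alpha_k mu tau kappa n k + \<rho>} lam' \<and>
     lam (alpha_k mu tau kappa n k) = \<i> * complex_of_real (omega_k mu tau kappa n k) \<and>
     (\<forall>a\<in>{alpha_k mu tau kappa n k - \<rho> <..< alpha_k mu tau kappa n k + \<rho>}.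
        Delta mu tau kappa n (lam a) a = 0) \<and>
     Re (lam' (alpha_k mu tau kappa n k)) > 0"
proof -
  define c where "c = mu + kappa"
  have c: "c > 0" using assms by (simp add: c_def)
  define w where "w = omega_k mu tau kappa n k"
  define a0 where "a0 = alpha_k mu tau kappa n k"
  define R where "R = (1 + w\<^sup>2 / c\<^sup>2) powr (real (n + 1) / 2)"
  have R: "R > 0" proof - have "1 + w\<^sup>2 / c\<^sup>2 > 0" by (simp add: add_pos_nonneg) then show ?thesis unfolding R_def by simp qed
  have a0: "a0 = exp (1 + R)" unfolding a0_def alpha_k_def R_def w_def c_def by simp
  have a0p: "a0 > 0" using a0 by simp
  have lna0: "1 - ln a0 = - R" using a0 by simp
  have weq: "w * tau + real (n + 1) * arctan (w / c) = pi + 2 * real k * pi"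
    using omega_spec[OF assms, of n k] by (simp add: w_def c_def)
  define xi where "xi = \<i> * complex_of_real w"
  define G where "G z = exp (z * complex_of_real tau) * (1 + z / complex_of_real c) ^ (n+1)" for z
  define G' where "G' z = exp (z * complex_of_real tau) * complex_of_real tau * (1 + z / complex_of_real c) ^ (n+1)
      + exp (z * complex_of_real tau) * (of_nat (n+1) * (1 + z / complex_of_real c) ^ n * (1 / complex_of_real c))" for z
  have dG: "(G has_field_derivative G' z) (at z)" for z
  proof -
    have d1: "((\<lambda>z. exp (z * complex_of_real tau)) has_field_derivative exp (z * complex_of_real tau) * complex_of_real tau) (at z)"
      by (auto intro!: derivative_eq_intros)
    have d2: "((\<lambda>z. 1 + z / complex_of_real c) has_field_derivative 1 / complex_of_real c) (at z)"
      using c by (auto intro!: derivative_eq_intros)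
    have d3: "((\<lambda>z. (1 + z / complex_of_real c) ^ (n+1)) has_field_derivative
        of_nat (n+1) * (1 + z / complex_of_real c) ^ n * (1 / complex_of_real c)) (at z)"
      using DERIV_power[OF d2, of "n+1"] by simp
    show ?thesis using DERIV_mult[OF d1 d3] unfolding G_def G'_def by (simp add: algebra_simps)
  qed
  have holG: "G holomorphic_on UNIV"
    unfolding G_def using c by (intro holomorphic_intros) auto
  have Gxi: "G xi = - complex_of_real R"
    using value_at[OF c weq] unfolding G_def xi_def R_def by (simp add: mult.assoc)
  define Q where "Q = complex_of_real tau + of_nat (n+1) / (complex_of_real c + xi)"
  have cxi: "complex_of_real c + xi \<noteq> 0"
    using c by (auto simp: xi_def complex_eq_iff)
  have G'Q: "G' xi = G xi * Q"
  proof -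
    have "of_nat (n+1) * (1 + xi / complex_of_real c) ^ n * (1 / complex_of_real c)
        = (1 + xi / complex_of_real c) ^ (n+1) * (of_nat (n+1) / (complex_of_real c + xi))"
    proof -
      define u where "u = 1 + xi / complex_of_real c"
      have e: "complex_of_real c + xi = complex_of_real c * u"
        using c by (simp add: field_simps u_def)
      have u0: "u \<noteq> 0" using cxi e by auto
      show ?thesis unfolding u_def[symmetric] e using u0 c by (simp add: field_simps)
    qed
    moreover have gen: "\<And>E P T Y::complex. E*T*P + E*(P*Y) = E*P*(T+Y)" by (simp add: algebra_simps)
    ultimately show ?thesis unfolding G'_def G_def Q_def by (simp only: gen)
  qed
  have ReQ: "Re Q > 0"
  proof -
    have "Re (of_nat (n+1) / (complex_of_real c + xi)) \<ge> 0"
      unfolding Re_complex_div_ge_0 using c by (simp add: xi_def)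
    then show ?thesis unfolding Q_def using assms(2) by simp
  qed
  have Q0: "Q \<noteq> 0" using ReQ by auto
  have dGxi: "deriv G xi \<noteq> 0"
    using DERIV_imp_deriv[OF dG] G'Q Gxi R Q0 by simp
  obtain r where r: "r > 0" "open (G ` ball xi r)" "inj_on G (ball xi r)"
    using has_complex_derivative_locally_invertible[OF holG _ _ dGxi] by auto
  define W where "W = G ` ball xi r"
  obtain h where holh: "h holomorphic_on W"
      and hd: "\<And>z. z \<in> ball xi r \<Longrightarrow> deriv G z * deriv h (G z) = 1"
      and hG: "\<And>z. z \<in> ball xi r \<Longrightarrow> h (G z) = z"
    using holomorphic_has_inverse[OF holomorphic_on_subset[OF holG] _ r(3)] unfolding W_def by auto
  have Gh: "G (h y) = y" if "y \<in> W" for y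
    using that hG unfolding W_def by auto
  have oW: "open W" using r W_def by simp
  define W' where "W' = W \<inter> {z. Re z < 0}"
  have oW': "open W'" unfolding W'_def using oW by (intro open_Int open_halfspace_Re_lt)
  define phi where "phi a = complex_of_real (1 - ln a)" for a
  have phia0: "phi a0 = G xi" unfolding phi_def lna0 Gxi by simp
  have y0: "phi a0 \<in> W'" unfolding W'_def W_def phia0 using r R Gxi by (metis (no_types, lifting) Int_Collect Re_complex_of_real centre_in_ball image_eqI neg_less_0_iff_less uminus_complex.sel(1))
  have cphi: "continuous_on {0<..} phi" unfolding phi_def by (intro continuous_intros) auto
  have oA: "open (phi -` W' \<inter> {0<..})"
    using cphi oW' continuous_on_open_vimage[of "{0<..}" phi] by auto
  obtain rho where rho: "rho > 0" "ball a0 rho \<subseteq> phi -` W' \<inter> {0<..}"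
    using oA a0p y0 by (meson IntI greaterThan_iff open_contains_ball_eq vimageI)
  define I where "I = {a0 - rho <..< a0 + rho}"
  have I: "a \<in> I \<Longrightarrow> phi a \<in> W' \<and> a > 0" for a
    using rho(2) unfolding I_def by (auto simp: dist_real_def subset_iff abs_less_iff)
  define lam where "lam a = h (phi a)" for a
  define lam' where "lam' a = complex_of_real (- inverse a) * deriv h (phi a)" for a
  show ?thesis unfolding a0_def[symmetric] w_def[symmetric]
  proof (intro exI[of _ rho] conjI[OF rho(1)], rule exI[of _ lam], rule exI[of _ lam'], intro conjI ballI)
    fix a assume aI: "a \<in> {a0 - rho <..< a0 + rho}"
    then have aW: "phi a \<in> W" and ap: "a > 0" using I[of a] unfolding I_def W'_def by auto
    have d1: "(phi has_vector_derivative complex_of_real (- inverse a)) (at a)"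
      unfolding phi_def using ap by (auto intro!: derivative_eq_intros simp: inverse_eq_divide)
    have d2: "(h has_field_derivative deriv h (phi a)) (at (phi a))"
      using holomorphic_derivI[OF holh oW aW] .
    show "(lam has_vector_derivative lam' a) (at a)"
      using field_vector_diff_chain_at[OF d1 d2] by (simp add: lam_def[abs_def] lam'_def o_def)
  next
    have ch: "continuous_on W (deriv h)"
      using holomorphic_deriv[OF holh oW] holomorphic_on_imp_continuous_on by blast
    have sub: "phi ` I \<subseteq> W" using I unfolding W'_def by auto
    have "continuous_on I phi" by (rule continuous_on_subset[OF cphi]) (use I in auto)
    then have C1: "continuous_on I (\<lambda>a. deriv h (phi a))"
      using continuous_on_compose2[OF ch _ sub] by auto
    have C2: "continuous_on I (\<lambda>a. complex_of_real (- inverse a))"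
      using I by (intro continuous_intros) auto
    show "continuous_on {a0 - rho <..< a0 + rho} lam'"
      unfolding lam'_def I_def[symmetric] by (rule continuous_on_mult[OF C2 C1])
  next
    show "lam a0 = \<i> * complex_of_real w"
      unfolding lam_def phia0 using hG[of xi] r by (simp add: xi_def)
  next
    fix a assume aI: "a \<in> {a0 - rho <..< a0 + rho}"
    then have aW: "phi a \<in> W" and aR: "Re (phi a) < 0" using I[of a] unfolding I_def W'_def by auto
    define l where "l = lam a"
    define P where "P = (1 + l / complex_of_real (mu + kappa)) ^ (n + 1)"
    have eq: "exp (l * complex_of_real tau) * P = phi a"
      using Gh[OF aW] unfolding l_def lam_def G_def P_def c_def by simp
    have P0: "P \<noteq> 0" using eq aR by auto
    have ee: "exp (- l * complex_of_real tau) * exp (l * complex_of_real tau) = 1"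
      by (simp add: mult_exp_exp)
    have X: "complex_of_real (1 - ln a) = exp (l * complex_of_real tau) * P"
      using eq unfolding phi_def by simp
    have "complex_of_real (1 - ln a) * exp (- l * complex_of_real tau) * inverse P
        = (exp (- l * complex_of_real tau) * exp (l * complex_of_real tau)) * (P * inverse P)"
      unfolding X by (simp only: mult_ac)
    also have "\<dots> = 1" using ee P0 by simp
    finally have "complex_of_real (1 - ln a) * exp (- l * complex_of_real tau) * inverse P = 1" .
    then show "Delta mu tau kappa n (lam a) a = 0"
      unfolding Delta_def l_def[symmetric] P_def[symmetric] by simp
  next
    have hd0: "deriv G xi * deriv h (phi a0) = 1" using hd[of xi] r phia0 by simp
    have "deriv h (phi a0) = inverse (G' xi)"
      using hd0 DERIV_imp_deriv[OF dG] by (metis DERIV_imp_deriv[OF dG] inverse_unique mult.commute)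
    then have L: "lam' a0 = complex_of_real (inverse (a0 * R)) * (1 / Q)"
      unfolding lam'_def G'Q Gxi using R a0p Q0 by (simp add: field_simps)
    have Re1: "Re (complex_of_real t * z) = t * Re z" for t z by simp
    have "Re (1 / Q) > 0" unfolding Re_complex_div_gt_0 using ReQ by simp
    moreover have "inverse (a0 * R) > 0" using R a0p by simp
    ultimately show "Re (lam' a0) > 0" unfolding L Re1 by simp
  qed
qed

end
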